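(* There exist admissible sets of types $I(11,7)$, $I(11,6)$ and $I(10,6)$; that is, for each $(m,w)\in\{(11,7),(11,6),(10,6)\}$ there is an admissible set $S\subseteq\{0,1,2\}^m$ consisting of $\binom{m}{w}$ vectors, each of weight $w$.
   Context: A set $S\subseteq\{0,1,2\}^m$ is admissible if (1) for all distinct $s,s'\in S$ there are coordinates $i,j$ with $s_i=0\neq s'_i$ and $s_j\neq 0=s'_j$; and (2) for all distinct $s,s',s''\in S$ there is a coordinate $k$ such that the multiset $\{s_k,s'_k,s''_k\}$ equals $\{0,1,2\}$, $\{0,0,1\}$ or $\{0,0,2\}$. The weight of a vector is its number of nonzero coordinates. *)

theory Defs
  imports "HOL-Library.Multiset"
begin

definition ternary_vectors :: "nat \<Rightarrow> nat list set" where
  "ternary_vectors m = {s. length s = m \<and> (\<forall>i<m. s ! i \<le> 2)}"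

definition weight :: "nat list \<Rightarrow> nat" where
  "weight s = card {i. i < length s \<and> s ! i \<noteq> 0}"

definition admissible :: "nat \<Rightarrow> nat list set \<Rightarrow> bool" where
  "admissible m S \<longleftrightarrow> S \<subseteq> ternary_vectors m \<and>
     (\<forall>s\<in>S. \<forall>s'\<in>S. s \<noteq> s' \<longrightarrow>
        (\<exists>i<m. \<exists>j<m. s ! i = 0 \<and> s' ! i \<noteq> 0 \<and> s ! j \<noteq> 0 \<and> s' ! j = 0)) \<and>
     (\<forall>s\<in>S. \<forall>s'\<in>S. \<forall>s''\<in>S. s \<noteq> s' \<and> s \<noteq> s'' \<and> s' \<noteq> s'' \<longrightarrow>
        (\<exists>k<m. {#s ! k, s' ! k, s'' ! k#} \<in> {{#0,1,2#}, {#0,0,1#}, {#0,0,2#}}))"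

end

theory Submission
  imports Defs
begin

definition gv :: "(nat \<Rightarrow> nat \<Rightarrow> bool) \<Rightarrow> nat set \<Rightarrow> nat \<Rightarrow> nat" where
  "gv W T k = (if k \<in> T then 0 else if odd (card {x\<in>T. W k x}) then 2 else 1)"

definition vecs :: "(nat \<Rightarrow> nat \<Rightarrow> bool) \<Rightarrow> nat \<Rightarrow> nat set \<Rightarrow> nat list" where
  "vecs W m T = map (gv W T) [0..<m]"

definition KEY :: "(nat \<Rightarrow> nat \<Rightarrow> bool) \<Rightarrow> nat \<Rightarrow> nat \<Rightarrow> bool" where
  "KEY W m s = (\<forall>A B C. A \<subseteq> {..<m} \<longrightarrow> B \<subseteq> {..<m} \<longrightarrow> C \<subseteq> {..<m} \<longrightarrow>
     A \<inter> B = {} \<longrightarrow> A \<inter> C = {} \<longrightarrow> B \<inter> C = {} \<longrightarrow>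
     card A = s \<longrightarrow> card B = s \<longrightarrow> card C = s \<longrightarrow>
     (\<exists>k\<in>A. odd (card {x\<in>B\<union>C. W k x})) \<or> (\<exists>k\<in>B. odd (card {x\<in>A\<union>C. W k x})) \<or>
     (\<exists>k\<in>C. odd (card {x\<in>A\<union>B. W k x})))"

lemma gv_le: "gv W T k \<le> 2" by (simp add: gv_def)
lemma gv_0: "(gv W T k = 0) = (k \<in> T)" by (simp add: gv_def)

lemma vecs_nth: "i < m \<Longrightarrow> vecs W m T ! i = gv W T i"
  by (simp add: vecs_def)

lemma vecs_len[simp]: "length (vecs W m T) = m" by (simp add: vecs_def)

lemma vecs_zero: "T \<subseteq> {..<m} \<Longrightarrow> {i. i < m \<and> vecs W m T ! i = 0} = T"
  by (auto simp: vecs_nth gv_0)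

lemma vecs_inj: "inj_on (vecs W m) {T. T \<subseteq> {..<m} \<and> card T = t}"
proof (rule inj_onI)
  fix T1 T2 assume a: "T1 \<in> {T. T \<subseteq> {..<m} \<and> card T = t}" "T2 \<in> {T. T \<subseteq> {..<m} \<and> card T = t}"
    and e: "vecs W m T1 = vecs W m T2"
  have "T1 = {i. i < m \<and> vecs W m T1 ! i = 0}" using a by (simp add: vecs_zero)
  also have "\<dots> = {i. i < m \<and> vecs W m T2 ! i = 0}" using e by simp
  also have "\<dots> = T2" using a by (simp add: vecs_zero)
  finally show "T1 = T2" .
qed

lemma vecs_tern: "vecs W m T \<in> ternary_vectors m"
  by (simp add: ternary_vectors_def vecs_nth gv_le)

lemma vecs_weight: assumes "T \<subseteq> {..<m}" shows "weight (vecs W m T) = m - card T"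
proof -
  have "{i. i < length (vecs W m T) \<and> vecs W m T ! i \<noteq> 0} = {..<m} - T"
    by (auto simp: vecs_nth gv_def)
  then show ?thesis using assms by (simp add: weight_def card_Diff_subset finite_subset)
qed

lemma card_fam: "card {T. T \<subseteq> {..<m} \<and> card T = t} = m choose t"
  using n_subsets[of "{..<m}" t] by simp

lemma subset_card_eq: "finite B \<Longrightarrow> A \<subseteq> B \<Longrightarrow> card A = card B \<Longrightarrow> A = B"
  using card_subset_eq by blast

lemma par_split:
  assumes "finite I" "finite B" "finite C" "I \<inter> B = {}" "I \<inter> C = {}" "B \<inter> C = {}"
  shows "(odd (card {x\<in>I\<union>B. P x}) \<noteq> odd (card {x\<in>I\<union>C. P x})) = odd (card {x\<in>B\<union>C. P x})"
proof -
  have h: "\<And>X Y. finite X \<Longrightarrow> finite Y \<Longrightarrow> X \<inter> Y = {} \<Longrightarrow>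
      card {x\<in>X\<union>Y. P x} = card {x\<in>X. P x} + card {x\<in>Y. P x}"
  proof -
    fix X Y :: "'a set" assume "finite X" "finite Y" "X \<inter> Y = {}"
    moreover have "{x\<in>X\<union>Y. P x} = {x\<in>X. P x} \<union> {x\<in>Y. P x}" by auto
    ultimately show "card {x\<in>X\<union>Y. P x} = card {x\<in>X. P x} + card {x\<in>Y. P x}"
      by (simp add: card_Un_disjoint disjoint_iff)
  qed
  show ?thesis using h[OF assms(1,2,4)] h[OF assms(1,3,5)] h[OF assms(2,3,6)] by auto
qed

lemma ms_a: "a = 0 \<Longrightarrow> b \<in> {1,2} \<Longrightarrow> c \<in> {1,2} \<Longrightarrow> b \<noteq> c \<Longrightarrow>
   {#a, b, c#} \<in> {{#0,1,2#}, {#0,0,1#}, {#0,0,2#}::nat multiset}"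
  by (auto simp: add_mset_commute)
lemma ms_b: "b = 0 \<Longrightarrow> a \<in> {1,2} \<Longrightarrow> c \<in> {1,2} \<Longrightarrow> a \<noteq> c \<Longrightarrow>
   {#a, b, c#} \<in> {{#0,1,2#}, {#0,0,1#}, {#0,0,2#}::nat multiset}"
  by (auto simp: add_mset_commute)
lemma ms_c: "c = 0 \<Longrightarrow> a \<in> {1,2} \<Longrightarrow> b \<in> {1,2} \<Longrightarrow> a \<noteq> b \<Longrightarrow>
   {#a, b, c#} \<in> {{#0,1,2#}, {#0,0,1#}, {#0,0,2#}::nat multiset}"
  by (auto simp: add_mset_commute)
lemma ms_ab: "a = 0 \<Longrightarrow> b = 0 \<Longrightarrow> c \<in> {1,2} \<Longrightarrow>
   {#a, b, c#} \<in> {{#0,1,2#}, {#0,0,1#}, {#0,0,2#}::nat multiset}"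
  by (auto simp: add_mset_commute)
lemma ms_ac: "a = 0 \<Longrightarrow> c = 0 \<Longrightarrow> b \<in> {1,2} \<Longrightarrow>
   {#a, b, c#} \<in> {{#0,1,2#}, {#0,0,1#}, {#0,0,2#}::nat multiset}"
  by (auto simp: add_mset_commute)
lemma ms_bc: "b = 0 \<Longrightarrow> c = 0 \<Longrightarrow> a \<in> {1,2} \<Longrightarrow>
   {#a, b, c#} \<in> {{#0,1,2#}, {#0,0,1#}, {#0,0,2#}::nat multiset}"
  by (auto simp: add_mset_commute)

lemma gv_12: "k \<notin> T \<Longrightarrow> gv W T k \<in> {1,2}" by (simp add: gv_def)

lemma gv_ne:
  assumes "finite I" "finite B" "finite C" "I \<inter> B = {}" "I \<inter> C = {}" "B \<inter> C = {}"
    "k \<notin> I \<union> B" "k \<notin> I \<union> C" "odd (card {x\<in>B\<union>C. W k x})"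
  shows "gv W (I \<union> B) k \<noteq> gv W (I \<union> C) k"
  using par_split[OF assms(1-6), of "W k"] assms(7-9) by (auto simp: gv_def)


lemma cond1:
  assumes "T1 \<subseteq> {..<m}" "T2 \<subseteq> {..<m}" "card T1 = card T2" "T1 \<noteq> T2"
  shows "\<exists>i<m. \<exists>j<m. vecs W m T1 ! i = 0 \<and> vecs W m T2 ! i \<noteq> 0 \<and> vecs W m T1 ! j \<noteq> 0 \<and> vecs W m T2 ! j = 0"
proof -
  have f1: "finite T1" "finite T2" using assms(1,2) finite_subset by auto
  have "\<not> T1 \<subseteq> T2" using card_subset_eq[OF f1(2)] assms(3,4) by metis
  then obtain i where i: "i \<in> T1" "i \<notin> T2" by auto
  have "\<not> T2 \<subseteq> T1" using card_subset_eq[OF f1(1)] assms(3,4) by metis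
  then obtain j where j: "j \<in> T2" "j \<notin> T1" by auto
  have im: "i < m" "j < m" using i j assms(1,2) by auto
  show ?thesis using i j im by (intro exI[of _ i] conjI impI exI[of _ j]) (auto simp: vecs_nth gv_0)
qed

lemma cond2:
  assumes T: "T1 \<subseteq> {..<m}" "T2 \<subseteq> {..<m}" "T3 \<subseteq> {..<m}"
    and c: "card T1 = t" "card T2 = t" "card T3 = t"
    and d: "T1 \<noteq> T2" "T1 \<noteq> T3" "T2 \<noteq> T3"
    and key: "\<And>s. 1 \<le> s \<Longrightarrow> 2*s + t \<le> m \<Longrightarrow> KEY W m s"
  shows "\<exists>k<m. {#vecs W m T1 ! k, vecs W m T2 ! k, vecs W m T3 ! k#} \<in> {{#0,1,2#}, {#0,0,1#}, {#0,0,2#}}"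
proof -
  have fin: "finite T1" "finite T2" "finite T3" using T by (meson finite_lessThan finite_subset)+
  have v: "\<And>T k. k < m \<Longrightarrow> vecs W m T ! k = gv W T k" by (simp add: vecs_nth)
  show ?thesis
  proof (cases "\<exists>k. (k \<in> T1 \<and> k \<in> T2 \<and> k \<notin> T3) \<or> (k \<in> T1 \<and> k \<in> T3 \<and> k \<notin> T2) \<or> (k \<in> T2 \<and> k \<in> T3 \<and> k \<notin> T1)")
    case True
    then obtain k where k: "(k \<in> T1 \<and> k \<in> T2 \<and> k \<notin> T3) \<or> (k \<in> T1 \<and> k \<in> T3 \<and> k \<notin> T2) \<or> (k \<in> T2 \<and> k \<in> T3 \<and> k \<notin> T1)" by blast
    then have km: "k < m" using T by auto
    show ?thesis
      using k km ms_ab[of "gv W T1 k" "gv W T2 k" "gv W T3 k"] ms_ac[of "gv W T1 k" "gv W T3 k" "gv W T2 k"]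
         ms_bc[of "gv W T2 k" "gv W T3 k" "gv W T1 k"]  gv_12[of k T1 W] gv_12[of k T2 W] gv_12[of k T3 W]
      by (auto simp: v gv_0 intro!: exI[of _ k])
  next
    case False
    define I where "I = T1 \<inter> T2 \<inter> T3"
    define A where "A = T1 - I"
    define B where "B = T2 - I"
    define C where "C = T3 - I"
    have e1: "T1 = I \<union> A" and e2: "T2 = I \<union> B" and e3: "T3 = I \<union> C"
      using False by (auto simp: I_def A_def B_def C_def)
    have dj: "A \<inter> B = {}" "A \<inter> C = {}" "B \<inter> C = {}" "I \<inter> A = {}" "I \<inter> B = {}" "I \<inter> C = {}"
      using False by (auto simp: I_def A_def B_def C_def)
    have fI: "finite I" "finite A" "finite B" "finite C" using fin by (auto simp: I_def A_def B_def C_def)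
    have sub: "I \<subseteq> T1" "I \<subseteq> T2" "I \<subseteq> T3" by (auto simp: I_def)
    define s where "s = t - card I"
    have cA: "card A = s" using c(1) card_Diff_subset[OF fI(1) sub(1)] by (simp add: A_def s_def)
    have cB: "card B = s" using c(2) card_Diff_subset[OF fI(1) sub(2)] by (simp add: B_def s_def)
    have cC: "card C = s" using c(3) card_Diff_subset[OF fI(1) sub(3)] by (simp add: C_def s_def)
    have cI: "card I \<le> t" using card_mono[OF fin(1) sub(1)] c(1) by simp
    have s1: "1 \<le> s"
    proof (rule ccontr)
      assume "\<not> 1 \<le> s"
      then have "s = 0" by simp
      then have "A = {}" using cA fI(2) by simp
      then have "T1 \<subseteq> T2" using e1 sub by auto
      then have "T1 = T2" using card_subset_eq[OF fin(2)] c by metis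
      then show False using d by simp
    qed
    have "card (I \<union> A \<union> B \<union> C) = card I + card A + card B + card C"
      using fI dj by (simp add: card_Un_disjoint Int_Un_distrib Int_Un_distrib2 Int_commute)
    moreover have "I \<union> A \<union> B \<union> C \<subseteq> {..<m}" using T e1 e2 e3 by auto
    ultimately have "card I + card A + card B + card C \<le> m"
      by (metis card_lessThan card_mono finite_lessThan)
    then have sm: "2*s + t \<le> m" using cA cB cC cI s_def by simp
    have K: "KEY W m s" using key[OF s1 sm] .
    have AB: "A \<subseteq> {..<m}" "B \<subseteq> {..<m}" "C \<subseteq> {..<m}" using T e1 e2 e3 by auto
    from K[unfolded KEY_def, rule_format, OF AB dj(1-3) cA cB cC]
    show ?thesis
    proof (elim disjE bexE)
      fix k assume k: "k \<in> A" "odd (card {x\<in>B\<union>C. W k x})"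
      have kn: "k \<notin> I \<union> B" "k \<notin> I \<union> C" using k dj by auto
      have ne: "gv W T2 k \<noteq> gv W T3 k" using gv_ne[where W=W and k=k, OF fI(1,3,4) dj(5,6,3) kn k(2)] e2 e3 by simp
      have km: "k < m" using k AB by auto
      have "k \<in> T1" "k \<notin> T2" "k \<notin> T3" using k kn e1 e2 e3 by auto
      then show ?thesis using km ne ms_a[of "gv W T1 k" "gv W T2 k" "gv W T3 k"] gv_12[of k T2 W] gv_12[of k T3 W]
        by (auto simp: v gv_0 intro!: exI[of _ k])
    next
      fix k assume k: "k \<in> B" "odd (card {x\<in>A\<union>C. W k x})"
      have kn: "k \<notin> I \<union> A" "k \<notin> I \<union> C" using k dj by auto
      have ne: "gv W T1 k \<noteq> gv W T3 k" using gv_ne[where W=W and k=k, OF fI(1,2,4) dj(4,6,2) kn k(2)] e1 e3 by simp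
      have km: "k < m" using k AB by auto
      have "k \<in> T2" "k \<notin> T1" "k \<notin> T3" using k kn e1 e2 e3 by auto
      then show ?thesis using km ne ms_b[of "gv W T2 k" "gv W T1 k" "gv W T3 k"] gv_12[of k T1 W] gv_12[of k T3 W]
        by (auto simp: v gv_0 intro!: exI[of _ k])
    next
      fix k assume k: "k \<in> C" "odd (card {x\<in>A\<union>B. W k x})"
      have kn: "k \<notin> I \<union> A" "k \<notin> I \<union> B" using k dj by auto
      have ne: "gv W T1 k \<noteq> gv W T2 k" using gv_ne[where W=W and k=k, OF fI(1,2,3) dj(4,5,1) kn k(2)] e1 e2 by simp
      have km: "k < m" using k AB by auto
      have "k \<in> T3" "k \<notin> T1" "k \<notin> T2" using k kn e1 e2 e3 by auto
      then show ?thesis using km ne ms_c[of "gv W T3 k" "gv W T1 k" "gv W T2 k"] gv_12[of k T1 W] gv_12[of k T2 W]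
        by (auto simp: v gv_0 intro!: exI[of _ k])
    qed
  qed
qed

lemma general:
  assumes tm: "t \<le> m"
    and key: "\<And>s. 1 \<le> s \<Longrightarrow> 2*s + t \<le> m \<Longrightarrow> KEY W m s"
  shows "\<exists>S. admissible m S \<and> finite S \<and> card S = m choose (m - t) \<and> (\<forall>s\<in>S. weight s = m - t)"
proof -
  define F where "F = {T. T \<subseteq> {..<m} \<and> card T = t}"
  define S where "S = vecs W m ` F"
  have fF: "finite F" unfolding F_def by (rule finite_subset[of _ "Pow {..<m}"]) auto
  have "finite S" using fF by (simp add: S_def)
  moreover have "card S = m choose (m - t)"
    using card_image[OF vecs_inj[of W m t]] card_fam[of m t] binomial_symmetric[OF tm]
    by (simp add: S_def F_def)
  moreover have "\<forall>s\<in>S. weight s = m - t" by (auto simp: S_def F_def vecs_weight)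
  moreover have "admissible m S"
    unfolding admissible_def
  proof (intro conjI ballI impI)
    show "S \<subseteq> ternary_vectors m" by (auto simp: S_def vecs_tern)
  next
    fix s s' assume "s \<in> S" "s' \<in> S" "s \<noteq> s'"
    then obtain T1 T2 where "T1 \<in> F" "T2 \<in> F" "s = vecs W m T1" "s' = vecs W m T2" "T1 \<noteq> T2"
      by (auto simp: S_def)
    then show "\<exists>i<m. \<exists>j<m. s ! i = 0 \<and> s' ! i \<noteq> 0 \<and> s ! j \<noteq> 0 \<and> s' ! j = 0"
      using cond1[of T1 m T2 W] by (auto simp: F_def)
  next
    fix s s' s'' assume "s \<in> S" "s' \<in> S" "s'' \<in> S" "s \<noteq> s' \<and> s \<noteq> s'' \<and> s' \<noteq> s''"
    then obtain T1 T2 T3 where "T1 \<in> F" "T2 \<in> F" "T3 \<in> F" "s = vecs W m T1" "s' = vecs W m T2" "s'' = vecs W m T3"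
       "T1 \<noteq> T2" "T1 \<noteq> T3" "T2 \<noteq> T3"
      by (auto simp: S_def)
    then show "\<exists>k<m. {#s ! k, s' ! k, s'' ! k#} \<in> {{#0, 1, 2#}, {#0, 0, 1#}, {#0, 0, 2#}}"
      using cond2[of T1 m T2 T3 t W] key by (auto simp: F_def)
  qed
  ultimately show ?thesis by blast
qed

fun combs :: "nat \<Rightarrow> 'a list \<Rightarrow> 'a list list" where
  "combs 0 xs = [[]]"
| "combs (Suc k) [] = []"
| "combs (Suc k) (x#xs) = map ((#) x) (combs k xs) @ combs (Suc k) xs"

fun allL :: "('a \<Rightarrow> bool) \<Rightarrow> 'a list \<Rightarrow> bool" where
  "allL f [] = True"
| "allL f (x#xs) = (if f x then allL f xs else False)"

fun parL :: "(nat \<Rightarrow> nat \<Rightarrow> bool) \<Rightarrow> nat \<Rightarrow> nat list \<Rightarrow> nat list \<Rightarrow> bool" where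
  "parL W j ps [] = False"
| "parL W j ps (x#xs) = (if x \<in> set ps then parL W j ps xs else if W j x then \<not> parL W j ps xs else parL W j ps xs)"

definition fullE :: "(nat \<Rightarrow> nat \<Rightarrow> bool) \<Rightarrow> nat list \<Rightarrow> nat list \<Rightarrow> bool" where
  "fullE W xs ps = allL (\<lambda>j. \<not> parL W j ps xs) ps"

definition noSplit2 :: "(nat \<Rightarrow> nat \<Rightarrow> bool) \<Rightarrow> nat \<Rightarrow> nat list \<Rightarrow> nat list \<Rightarrow> bool" where
  "noSplit2 W s xs ys = allL (\<lambda>qs. if fullE W xs qs then \<not> fullE W xs (filter (\<lambda>x. x \<notin> set qs) ys) else True)
      (map ((#) (hd ys)) (combs (s - 1) (tl ys)))"

definition noSplit3 :: "(nat \<Rightarrow> nat \<Rightarrow> bool) \<Rightarrow> nat \<Rightarrow> nat list \<Rightarrow> bool" where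
  "noSplit3 W s xs = allL (\<lambda>ps. if fullE W xs ps then noSplit2 W s xs (filter (\<lambda>x. x \<notin> set ps) xs) else True)
      (map ((#) (hd xs)) (combs (s - 1) (tl xs)))"

definition fullEs :: "(nat \<Rightarrow> nat \<Rightarrow> bool) \<Rightarrow> nat set \<Rightarrow> nat set \<Rightarrow> bool" where
  "fullEs W X P = (\<forall>j\<in>P. even (card {x\<in>X - P. W j x}))"

lemma allL_iff: "allL f xs = (\<forall>x\<in>set xs. f x)"
  by (induction xs) auto

lemma parL_iff: "parL W j ps xs = odd (length (filter (\<lambda>x. x \<notin> set ps \<and> W j x) xs))"
  by (induction xs) auto

lemma fullE_iff: "distinct xs \<Longrightarrow> fullE W xs ps = fullEs W (set xs) (set ps)"
proof -
  assume d: "distinct xs"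
  have "\<And>j. length (filter (\<lambda>x. x \<notin> set ps \<and> W j x) xs) = card {x\<in>set xs - set ps. W j x}"
  proof -
    fix j
    have "length (filter (\<lambda>x. x \<notin> set ps \<and> W j x) xs) = card (set (filter (\<lambda>x. x \<notin> set ps \<and> W j x) xs))"
      using d by (metis distinct_card distinct_filter)
    also have "set (filter (\<lambda>x. x \<notin> set ps \<and> W j x) xs) = {x\<in>set xs - set ps. W j x}" by auto
    finally show "length (filter (\<lambda>x. x \<notin> set ps \<and> W j x) xs) = card {x\<in>set xs - set ps. W j x}" .
  qed
  then show ?thesis by (simp add: fullE_def fullEs_def allL_iff parL_iff)
qed

lemma combs_complete:
  "distinct xs \<Longrightarrow> A \<subseteq> set xs \<Longrightarrow> card A = k \<Longrightarrow> \<exists>ys\<in>set (combs k xs). set ys = A \<and> distinct ys"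
proof (induction xs arbitrary: k A)
  case Nil
  then show ?case by (cases k) auto
next
  case (Cons x xs)
  have fA: "finite A" using Cons.prems(2) finite_subset by blast
  show ?case
  proof (cases k)
    case 0
    then have "A = {}" using Cons.prems(3) fA by simp
    then show ?thesis using 0 by simp
  next
    case (Suc k')
    show ?thesis
    proof (cases "x \<in> A")
      case True
      have "A - {x} \<subseteq> set xs" using Cons.prems(2) by auto
      moreover have "card (A - {x}) = k'" using Cons.prems(3) True fA Suc by simp
      ultimately obtain ys where ys: "ys \<in> set (combs k' xs)" "set ys = A - {x}" "distinct ys"
        using Cons.IH[of "A - {x}" k'] Cons.prems(1) by auto
      have "x # ys \<in> set (combs k (x#xs))" using ys Suc by simp
      moreover have "set (x # ys) = A" using ys True by auto
      moreover have "distinct (x # ys)" using ys by simp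
      ultimately show ?thesis by blast
    next
      case False
      have "A \<subseteq> set xs" using Cons.prems(2) False by auto
      then obtain ys where ys: "ys \<in> set (combs k xs)" "set ys = A" "distinct ys"
        using Cons.IH[of A k] Cons.prems by auto
      then show ?thesis using Suc by auto
    qed
  qed
qed

lemma hd_comb:
  assumes "distinct zs" "zs \<noteq> []" "hd zs \<in> P" "P \<subseteq> set zs" "card P = s"
  shows "\<exists>qs\<in>set (map ((#) (hd zs)) (combs (s - 1) (tl zs))). set qs = P"
proof -
  obtain h t where zs: "zs = h # t" using assms(2) by (cases zs) auto
  have fP: "finite P" using assms(4) finite_subset by blast
  have "P - {h} \<subseteq> set t" using assms(3,4) zs by auto
  moreover have "card (P - {h}) = s - 1" using assms(3,5) fP zs by simp
  ultimately obtain ys where "ys \<in> set (combs (s - 1) t)" "set ys = P - {h}"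
    using combs_complete[of t "P - {h}" "s - 1"] assms(1) zs by auto
  then show ?thesis using zs assms(3) by (intro bexI[of _ "h # ys"]) auto
qed

lemma noSplit2_sound_aux:
  assumes ns: "noSplit2 W s xs zs" and d: "distinct xs" "distinct zs" and ne: "zs \<noteq> []"
    and z: "set zs = B \<union> C" "B \<inter> C = {}" "card B = s" and hB: "hd zs \<in> B"
    and fB: "fullEs W (set xs) B" and fC: "fullEs W (set xs) C"
  shows False
proof -
  have "B \<subseteq> set zs" using z(1) by auto
  then obtain qs where qs: "qs \<in> set (map ((#) (hd zs)) (combs (s - 1) (tl zs)))" "set qs = B"
    using hd_comb[OF d(2) ne hB _ z(3)] by blast
  have "\<forall>q\<in>set (map ((#) (hd zs)) (combs (s - 1) (tl zs))). (if fullE W xs q then \<not> fullE W xs (filter (\<lambda>x. x \<notin> set q) zs) else True)"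
    using ns by (simp only: noSplit2_def allL_iff)
  then have "(if fullE W xs qs then \<not> fullE W xs (filter (\<lambda>x. x \<notin> set qs) zs) else True)"
    using qs(1) by blast
  moreover have "fullE W xs qs" using fB qs(2) d(1) by (simp add: fullE_iff)
  moreover have "set (filter (\<lambda>x. x \<notin> set qs) zs) = C" using z qs(2) by auto
  ultimately show False using fC d(1) by (simp add: fullE_iff)
qed

lemma noSplit2_sound:
  assumes ns: "noSplit2 W s xs zs" and d: "distinct xs" "distinct zs" and ne: "zs \<noteq> []"
    and z: "set zs = B \<union> C" "B \<inter> C = {}" "card B = s" "card C = s"
    and fB: "fullEs W (set xs) B" and fC: "fullEs W (set xs) C"
  shows False
proof -
  have "hd zs \<in> B \<union> C" using ne z(1) hd_in_set by blast
  then show False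
  proof
    assume "hd zs \<in> B" then show False using noSplit2_sound_aux[OF ns d ne z(1-3)] fB fC by blast
  next
    assume "hd zs \<in> C" then show False using noSplit2_sound_aux[OF ns d ne, of C B] z fB fC by blast
  qed
qed

lemma noSplit3_sound_aux:
  assumes ns: "noSplit3 W s xs" and d: "distinct xs" and ne: "xs \<noteq> []"
    and z: "set xs = A \<union> B \<union> C" "A \<inter> B = {}" "A \<inter> C = {}" "B \<inter> C = {}"
      "card A = s" "card B = s" "card C = s" and hA: "hd xs \<in> A"
    and fA: "fullEs W (set xs) A" and fB: "fullEs W (set xs) B" and fC: "fullEs W (set xs) C"
  shows False
proof -
  have "A \<subseteq> set xs" using z(1) by auto
  then obtain ps where ps: "ps \<in> set (map ((#) (hd xs)) (combs (s - 1) (tl xs)))" "set ps = A"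
    using hd_comb[OF d ne hA _ z(5)] by blast
  have "\<forall>q\<in>set (map ((#) (hd xs)) (combs (s - 1) (tl xs))). (if fullE W xs q then noSplit2 W s xs (filter (\<lambda>x. x \<notin> set q) xs) else True)"
    using ns by (simp only: noSplit3_def allL_iff)
  then have "(if fullE W xs ps then noSplit2 W s xs (filter (\<lambda>x. x \<notin> set ps) xs) else True)"
    using ps(1) by blast
  moreover have "fullE W xs ps" using fA ps(2) d by (simp add: fullE_iff)
  ultimately have n2: "noSplit2 W s xs (filter (\<lambda>x. x \<notin> set ps) xs)" by simp
  have sz: "set (filter (\<lambda>x. x \<notin> set ps) xs) = B \<union> C" using z ps(2) by auto
  have s1: "s \<noteq> 0" using hA z(5) card_0_eq[of A] z(1) by (metis empty_iff finite_Un finite_set)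
  then have "B \<noteq> {}" using z(6) by auto
  then have "set (filter (\<lambda>x. x \<notin> set ps) xs) \<noteq> {}" using sz by simp
  then have "filter (\<lambda>x. x \<notin> set ps) xs \<noteq> []" by (metis empty_set)
  then show False using noSplit2_sound[OF n2 d _ _ sz z(4) z(6) z(7) fB fC] d by simp
qed

lemma noSplit3_sound:
  assumes ns: "noSplit3 W s xs" and d: "distinct xs" and ne: "xs \<noteq> []"
    and z: "set xs = A \<union> B \<union> C" "A \<inter> B = {}" "A \<inter> C = {}" "B \<inter> C = {}"
      "card A = s" "card B = s" "card C = s"
    and fA: "fullEs W (set xs) A" and fB: "fullEs W (set xs) B" and fC: "fullEs W (set xs) C"
  shows False
proof -
  have "hd xs \<in> A \<union> B \<union> C" using ne z(1) hd_in_set by blast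
  then consider "hd xs \<in> A" | "hd xs \<in> B" | "hd xs \<in> C" by blast
  then show False
  proof cases
    case 1 then show ?thesis using noSplit3_sound_aux[OF ns d ne z] fA fB fC by blast
  next
    case 2 then show ?thesis using noSplit3_sound_aux[OF ns d ne, of B A C] z fA fB fC by (auto simp: Un_ac Int_commute)
  next
    case 3 then show ?thesis using noSplit3_sound_aux[OF ns d ne, of C A B] z fA fB fC by (auto simp: Un_ac Int_commute)
  qed
qed

definition Wrows :: "nat list list" where "Wrows = [[2,3,4,5,6,8,9],[2,4,5,6,8,9,10],[0,1,3,6,7,8,10],[0,1,10],[0,1,3,6,7,9,10],[0,1,2,3,6,7,10],[0,1,3,7,10],[0,3,10],[2,5,9],[0,1,3,5,6,7,10],[0,2,4,5,6,8,9]]"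
definition Wt :: "nat \<Rightarrow> nat \<Rightarrow> bool" where "Wt k x = (x \<in> set (Wrows ! k))"
lemma Wt_tab[simp]:
  "Wt (0) (0) = False"
  "Wt (0) (Suc 0) = False"
  "Wt (0) (2) = True"
  "Wt (0) (3) = True"
  "Wt (0) (4) = True"
  "Wt (0) (5) = True"
  "Wt (0) (6) = True"
  "Wt (0) (7) = False"
  "Wt (0) (8) = True"
  "Wt (0) (9) = True"
  "Wt (0) (10) = False"
  "Wt (Suc 0) (0) = False"
  "Wt (Suc 0) (Suc 0) = False"
  "Wt (Suc 0) (2) = True"
  "Wt (Suc 0) (3) = False"
  "Wt (Suc 0) (4) = True"
  "Wt (Suc 0) (5) = True"
  "Wt (Suc 0) (6) = True"
  "Wt (Suc 0) (7) = False"
  "Wt (Suc 0) (8) = True"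
  "Wt (Suc 0) (9) = True"
  "Wt (Suc 0) (10) = True"
  "Wt (2) (0) = True"
  "Wt (2) (Suc 0) = True"
  "Wt (2) (2) = False"
  "Wt (2) (3) = True"
  "Wt (2) (4) = False"
  "Wt (2) (5) = False"
  "Wt (2) (6) = True"
  "Wt (2) (7) = True"
  "Wt (2) (8) = True"
  "Wt (2) (9) = False"
  "Wt (2) (10) = True"
  "Wt (3) (0) = True"
  "Wt (3) (Suc 0) = True"
  "Wt (3) (2) = False"
  "Wt (3) (3) = False"
  "Wt (3) (4) = False"
  "Wt (3) (5) = False"
  "Wt (3) (6) = False"
  "Wt (3) (7) = False"
  "Wt (3) (8) = False"
  "Wt (3) (9) = False"
  "Wt (3) (10) = True"
  "Wt (4) (0) = True"
  "Wt (4) (Suc 0) = True"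
  "Wt (4) (2) = False"
  "Wt (4) (3) = True"
  "Wt (4) (4) = False"
  "Wt (4) (5) = False"
  "Wt (4) (6) = True"
  "Wt (4) (7) = True"
  "Wt (4) (8) = False"
  "Wt (4) (9) = True"
  "Wt (4) (10) = True"
  "Wt (5) (0) = True"
  "Wt (5) (Suc 0) = True"
  "Wt (5) (2) = True"
  "Wt (5) (3) = True"
  "Wt (5) (4) = False"
  "Wt (5) (5) = False"
  "Wt (5) (6) = True"
  "Wt (5) (7) = True"
  "Wt (5) (8) = False"
  "Wt (5) (9) = False"
  "Wt (5) (10) = True"
  "Wt (6) (0) = True"
  "Wt (6) (Suc 0) = True"
  "Wt (6) (2) = False"
  "Wt (6) (3) = True"
  "Wt (6) (4) = False"
  "Wt (6) (5) = False"
  "Wt (6) (6) = False"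
  "Wt (6) (7) = True"
  "Wt (6) (8) = False"
  "Wt (6) (9) = False"
  "Wt (6) (10) = True"
  "Wt (7) (0) = True"
  "Wt (7) (Suc 0) = False"
  "Wt (7) (2) = False"
  "Wt (7) (3) = True"
  "Wt (7) (4) = False"
  "Wt (7) (5) = False"
  "Wt (7) (6) = False"
  "Wt (7) (7) = False"
  "Wt (7) (8) = False"
  "Wt (7) (9) = False"
  "Wt (7) (10) = True"
  "Wt (8) (0) = False"
  "Wt (8) (Suc 0) = False"
  "Wt (8) (2) = True"
  "Wt (8) (3) = False"
  "Wt (8) (4) = False"
  "Wt (8) (5) = True"
  "Wt (8) (6) = False"
  "Wt (8) (7) = False"
  "Wt (8) (8) = False"
  "Wt (8) (9) = True"
  "Wt (8) (10) = False"
  "Wt (9) (0) = True"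
  "Wt (9) (Suc 0) = True"
  "Wt (9) (2) = False"
  "Wt (9) (3) = True"
  "Wt (9) (4) = False"
  "Wt (9) (5) = True"
  "Wt (9) (6) = True"
  "Wt (9) (7) = True"
  "Wt (9) (8) = False"
  "Wt (9) (9) = False"
  "Wt (9) (10) = True"
  "Wt (10) (0) = True"
  "Wt (10) (Suc 0) = False"
  "Wt (10) (2) = True"
  "Wt (10) (3) = False"
  "Wt (10) (4) = True"
  "Wt (10) (5) = True"
  "Wt (10) (6) = True"
  "Wt (10) (7) = False"
  "Wt (10) (8) = True"
  "Wt (10) (9) = True"
  "Wt (10) (10) = False"
  by (simp_all add: Wt_def Wrows_def)


lemma check_KEY:
  assumes ch: "allL (noSplit3 W s) (combs k xs)" and k: "k = 3*s" and s1: "1 \<le> s"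
    and xs: "set xs = {..<m}" "distinct xs"
  shows "KEY W m s"
  unfolding KEY_def
proof (intro allI impI)
  fix A B C :: "nat set"
  assume AB: "A \<subseteq> {..<m}" "B \<subseteq> {..<m}" "C \<subseteq> {..<m}" and dj: "A \<inter> B = {}" "A \<inter> C = {}" "B \<inter> C = {}"
    and c: "card A = s" "card B = s" "card C = s"
  show "(\<exists>k\<in>A. odd (card {x\<in>B\<union>C. W k x})) \<or> (\<exists>k\<in>B. odd (card {x\<in>A\<union>C. W k x})) \<or>
     (\<exists>k\<in>C. odd (card {x\<in>A\<union>B. W k x}))"
  proof (rule ccontr)
    assume n: "\<not> ?thesis"
    define X where "X = A \<union> B \<union> C"
    have fin: "finite A" "finite B" "finite C" using AB by (meson finite_lessThan finite_subset)+
    have cX: "card X = k" unfolding X_def using fin dj c k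
      by (simp add: card_Un_disjoint Int_Un_distrib2)
    have "X \<subseteq> set xs" using AB xs(1) by (auto simp: X_def)
    then obtain ys where ys: "ys \<in> set (combs k xs)" "set ys = X" "distinct ys"
      using combs_complete[OF xs(2) _ cX] by blast
    have ns: "noSplit3 W s ys" using ch ys(1) by (simp add: allL_iff)
    have "A \<noteq> {}" using c(1) s1 by auto
    then have ne: "ys \<noteq> []" using ys(2) X_def by auto
    have XA: "X - A = B \<union> C" "X - B = A \<union> C" "X - C = A \<union> B" using dj by (auto simp: X_def)
    have nA: "\<forall>k\<in>A. even (card {x\<in>B\<union>C. W k x})" using n by blast
    have nB: "\<forall>k\<in>B. even (card {x\<in>A\<union>C. W k x})" using n by blast
    have nC: "\<forall>k\<in>C. even (card {x\<in>A\<union>B. W k x})" using n by blast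
    have fA: "fullEs W (set ys) A" unfolding fullEs_def ys(2) XA(1) using nA .
    have fB: "fullEs W (set ys) B" unfolding fullEs_def ys(2) XA(2) using nB .
    have fC: "fullEs W (set ys) C" unfolding fullEs_def ys(2) XA(3) using nC .
    show False using noSplit3_sound[OF ns ys(3) ne _ dj c fA fB fC] ys(2) X_def by simp
  qed
qed

lemma KEY_mono:
  assumes K: "KEY W m s" and le: "m' \<le> m"
  shows "KEY W m' s"
  unfolding KEY_def
proof (intro allI impI)
  fix A B C :: "nat set"
  assume a: "A \<subseteq> {..<m'}" "B \<subseteq> {..<m'}" "C \<subseteq> {..<m'}" "A \<inter> B = {}" "A \<inter> C = {}" "B \<inter> C = {}"
    "card A = s" "card B = s" "card C = s"
  have "{..<m'} \<subseteq> {..<m}" using le by auto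
  note sub = this
  have b1: "A \<subseteq> {..<m}" using sub a(1) by (rule_tac order_trans) auto
  have b2: "B \<subseteq> {..<m}" using sub a(2) by (rule_tac order_trans) auto
  have b3: "C \<subseteq> {..<m}" using sub a(3) by (rule_tac order_trans) auto
  note b = b1 b2 b3
  show "(\<exists>k\<in>A. odd (card {x\<in>B\<union>C. W k x})) \<or> (\<exists>k\<in>B. odd (card {x\<in>A\<union>C. W k x})) \<or>
     (\<exists>k\<in>C. odd (card {x\<in>A\<union>B. W k x}))"
    using K[unfolded KEY_def, rule_format, OF b a(4-9)] .
qed

lemma c1: "allL (noSplit3 Wt (Suc (0))) (combs (Suc (Suc (Suc (0)))) [0,1,2,3,4,5,6,7,8,9,10])"
  by (simp add: noSplit3_def noSplit2_def fullE_def)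

lemma c2: "allL (noSplit3 Wt (Suc (Suc (0)))) (combs (Suc (Suc (Suc (Suc (Suc (Suc (0))))))) [0,1,2,3,4,5,6,7,8,9,10])"
  by (simp add: noSplit3_def noSplit2_def fullE_def)

lemma c3: "allL (noSplit3 Wt (Suc (Suc (Suc (0))))) (combs (Suc (Suc (Suc (Suc (Suc (Suc (Suc (Suc (Suc (0)))))))))) [0,1,2,3,4,5,6,7,8,9,10])"
  by (simp add: noSplit3_def noSplit2_def fullE_def)

lemma L11: "set [0,1,2,3,4,5,6,7,8,9,10::nat] = {..<11}" "distinct [0,1,2,3,4,5,6,7,8,9,10::nat]"
proof -
  have "[0..<11] = [0,1,2,3,4,5,6,7,8,9,10::nat]" by (simp add: upt_rec)
  then show "set [0,1,2,3,4,5,6,7,8,9,10::nat] = {..<11}" by (metis atLeast_upt)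
  show "distinct [0,1,2,3,4,5,6,7,8,9,10::nat]" by simp
qed

lemma K11: "1 \<le> s \<Longrightarrow> s \<le> 3 \<Longrightarrow> KEY Wt 11 s"
proof -
  assume "1 \<le> s" "s \<le> 3"
  then consider "s = 1" | "s = 2" | "s = 3" by linarith
  then show "KEY Wt 11 s"
  proof cases
    case 1 then show ?thesis using check_KEY[OF c1 _ _ L11] by simp
  next
    case 2 then show ?thesis using check_KEY[OF c2 _ _ L11] by (simp add: numeral_2_eq_2)
  next
    case 3 then show ?thesis using check_KEY[OF c3 _ _ L11] by (simp add: numeral_3_eq_3)
  qed
qed

theorem lemma2p13:
  shows "\<forall>(m, w) \<in> {(11::nat, 7::nat), (11, 6), (10, 6)}.
           \<exists>S. admissible m S \<and> finite S \<and> card S = m choose w \<and> (\<forall>s\<in>S. weight s = w)"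
proof -
  have a: "\<exists>S. admissible 11 S \<and> finite S \<and> card S = 11 choose 7 \<and> (\<forall>s\<in>S. weight s = 7)"
    using general[of 4 11 Wt] K11 by simp
  have b: "\<exists>S. admissible 11 S \<and> finite S \<and> card S = 11 choose 6 \<and> (\<forall>s\<in>S. weight s = 6)"
    using general[of 5 11 Wt] K11 by simp
  have c: "\<exists>S. admissible 10 S \<and> finite S \<and> card S = 10 choose 6 \<and> (\<forall>s\<in>S. weight s = 6)"
    using general[of 4 10 Wt] K11 KEY_mono[of Wt 11 _ 10] by simp
  show ?thesis using a b c by simp
qed

end
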